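(* Let $R\ge 0$ and let $\lambda$ be a positive, increasing, smooth function on $[R,\infty)$. Let $g$ be a positive differentiable function on $[R,\infty)$ (with $R>0$ or $g$ defined on $(0,\infty)$) such that $X\mapsto\log g(e^X)$ is convex. Suppose there is $x_1$ with $g(x_1)=\lambda(x_1)$ and there is $x_2$ with $R\le x_2<x_1$ and $g(x_2)<\lambda(x_2)$. Then there is $x_0$ with $x_2<x_0\le x_1$, $g(x_0)=\lambda(x_0)$, and \[ \int_{x_0}^\infty g(x)\,\lambda(x)^{-1}\,dx\ge S(x_0,\lambda). \]
   Context: For a positive increasing smooth function $\lambda$ on $[R,\infty)$ and $x_0\ge R$, \[ S(x_0,\lambda)=\int_{x_0}^\infty\frac{\lambda(x_0)}{\lambda(x)}\left(\frac{x}{x_0}\right)^{x_0\lambda'(x_0)/\lambda(x_0)}dx . \] *)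

theory Defs
  imports "HOL-Analysis.Analysis"
begin

definition smooth_on :: "real set \<Rightarrow> (real \<Rightarrow> real) \<Rightarrow> bool" where
  "smooth_on S f \<longleftrightarrow> (\<exists>D :: nat \<Rightarrow> real \<Rightarrow> real.
      (\<forall>x\<in>S. D 0 x = f x) \<and>
      (\<forall>n. \<forall>x\<in>S. (D n has_real_derivative D (Suc n) x) (at x within S)))"

text \<open>The quantity S(x0, lambda), as an extended nonnegative real (the integrand is
  positive, so the integral may be +infinity).\<close>
definition S_int :: "real \<Rightarrow> (real \<Rightarrow> real) \<Rightarrow> ennreal" where
  "S_int x0 lam = (\<integral>\<^sup>+ x \<in> {x0..}.
      ennreal (lam x0 / lam x * (x / x0) powr (x0 * deriv lam x0 / lam x0)) \<partial>lborel)"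

end

theory Submission
  imports Defs
begin

theorem lemma4p1:
  fixes R x1 x2 :: real and lam g :: "real \<Rightarrow> real"
  assumes "R \<ge> 0"
    and lam_pos: "\<forall>x\<in>{R..}. lam x > 0"
    and lam_incr: "mono_on {R..} lam"
    and lam_smooth: "smooth_on {R..} lam"
    and g_pos: "\<forall>x\<in>{x. 0 < x \<and> R \<le> x}. g x > 0"
    and g_diff: "g differentiable_on {x. 0 < x \<and> R \<le> x}"
    and g_logconvex: "convex_on (ln ` {x. 0 < x \<and> R \<le> x}) (\<lambda>X. ln (g (exp X)))"
    and x1: "R \<le> x1" "g x1 = lam x1"
    and x2: "0 < x2" "R \<le> x2" "x2 < x1" "g x2 < lam x2"
  shows "\<exists>x0. x2 < x0 \<and> x0 \<le> x1 \<and> g x0 = lam x0 \<and>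
           (\<integral>\<^sup>+ x \<in> {x0..}. ennreal (g x / lam x) \<partial>lborel) \<ge> S_int x0 lam"
proof -
  define S where "S = {x. 0 < x \<and> R \<le> x}"
  obtain D :: "nat \<Rightarrow> real \<Rightarrow> real" where D0: "\<forall>x\<in>{R..}. D 0 x = lam x"
    and DS: "\<forall>n. \<forall>x\<in>{R..}. (D n has_real_derivative D (Suc n) x) (at x within {R..})"
    using lam_smooth unfolding smooth_on_def by blast
  have lamc: "continuous_on {R..} lam"
  proof -
    have "continuous_on {R..} (D 0)" using DS by (intro DERIV_continuous_on) auto
    thus ?thesis using D0 continuous_on_cong by force
  qed
  have gc: "continuous_on S g" using g_diff S_def differentiable_imp_continuous_on by blast
  define phi where "phi = (\<lambda>x. g x - lam x)"
  have sub: "{x2..x1} \<subseteq> S" "{x2..x1} \<subseteq> {R..}" using x2 S_def by auto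
  have phic: "continuous_on {x2..x1} phi" unfolding phi_def
    using continuous_on_subset[OF gc sub(1)] continuous_on_subset[OF lamc sub(2)]
    by (intro continuous_intros) auto
  define T where "T = {x2..x1} \<inter> phi -` {0..}"
  have Tcl: "closed T" unfolding T_def using continuous_closed_preimage[OF phic] by auto
  have x1T: "x1 \<in> T" using x1 x2 unfolding T_def phi_def by auto
  define x0 where "x0 = Inf T"
  have bb: "bdd_below T" unfolding T_def by (rule bdd_belowI[of _ x2]) auto
  have x0T: "x0 \<in> T" unfolding x0_def using closed_contains_Inf[OF _ bb Tcl] x1T by auto
  have x0x1: "x0 \<le> x1" unfolding x0_def using cInf_lower[OF x1T bb] .
  have below: "phi y < 0" if "x2 \<le> y" "y < x0" for y
  proof (rule ccontr)
    assume "\<not> phi y < 0"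
    hence "y \<in> T" using that x0x1 unfolding T_def by auto
    hence "x0 \<le> y" unfolding x0_def using cInf_lower bb by auto
    thus False using that by auto
  qed
  have x2x0: "x2 < x0"
  proof -
    have "x2 \<le> x0" using x0T T_def by auto
    moreover have "x2 \<noteq> x0" using x0T x2 unfolding T_def phi_def by auto
    ultimately show ?thesis by auto
  qed
  have phix0: "phi x0 = 0"
  proof -
    have "phi x2 \<le> 0" "0 \<le> phi x0" using x2 x0T unfolding phi_def T_def by auto
    then obtain z where z: "x2 \<le> z" "z \<le> x0" "phi z = 0"
      using IVT'[of phi x2 0 x0] continuous_on_subset[OF phic] x0x1 x2x0 by fastforce
    have "\<not> z < x0" using below z by fastforce
    thus ?thesis using z by auto
  qed
  have x0pos: "0 < x0" "R < x0" using x2x0 x2 by auto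
  have x0S: "x0 \<in> S" using x0pos S_def by auto
  define a where "a = D 1 x0"
  have lamD: "(lam has_real_derivative a) (at x0)"
  proof -
    have "(D 0 has_real_derivative a) (at x0 within {R..})" using DS x0pos a_def by auto
    hence "(D 0 has_real_derivative a) (at x0)"
      using at_within_interior[of x0 "{R..}"] x0pos by auto
    thus ?thesis
      by (rule has_field_derivative_transform_within_open[of _ _ _ "{R<..}"]) (use D0 x0pos in auto)
  qed
  hence dl: "deriv lam x0 = a" by (rule DERIV_imp_deriv)
  have "g differentiable (at x0 within S)" using g_diff[folded S_def] x0S unfolding differentiable_on_def by simp
  moreover have "at x0 within S = at x0"
  proof (rule at_within_interior)
    have "open {max 0 R<..}" by auto
    moreover have "{max 0 R<..} \<subseteq> S" unfolding S_def by auto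
    moreover have "x0 \<in> {max 0 R<..}" using x0pos by auto
    ultimately show "x0 \<in> interior S" using interior_maximal by blast
  qed
  ultimately have "g differentiable (at x0)" by simp
  then obtain b where gD: "(g has_real_derivative b) (at x0)"
    using DERIV_deriv_iff_real_differentiable by blast
  have ab: "a \<le> b"
  proof (rule ccontr)
    assume "\<not> a \<le> b"
    have "(phi has_real_derivative b - a) (at x0)" unfolding phi_def
      using gD lamD by (intro derivative_intros) auto
    then obtain d where d: "d > 0" "\<forall>h>0. x0 - h \<in> UNIV \<longrightarrow> h < d \<longrightarrow> phi x0 < phi (x0 - h)"
      using has_real_derivative_neg_dec_left[of phi "b - a" x0 UNIV] \<open>\<not> a \<le> b\<close> by auto
    define h where "h = min (d/2) (x0 - x2)"
    have "h > 0" "h < d" using d x2x0 h_def by auto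
    hence "phi x0 < phi (x0 - h)" using d by auto
    moreover have "phi (x0 - h) < 0" using below[of "x0 - h"] \<open>h > 0\<close> h_def by auto
    ultimately show False using phix0 by auto
  qed
  have gx0: "g x0 = lam x0" using phix0 phi_def by auto
  have lx0: "lam x0 > 0" using lam_pos x0pos by auto
  define c where "c = x0 * b / g x0"
  have ac: "x0 * a / lam x0 \<le> c" unfolding c_def gx0 using ab lx0 x0pos
    by (intro divide_right_mono mult_left_mono) auto
  define A where "A = {ln x2<..}"
  have AS: "A \<subseteq> ln ` S"
  proof
    fix X assume "X \<in> A"
    hence "exp X > x2" unfolding A_def using x2
      by (metis exp_ln greaterThan_iff exp_less_cancel_iff)
    hence "exp X \<in> S" using x2 S_def by auto
    thus "X \<in> ln ` S" by (metis image_eqI ln_exp)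
  qed
  have cvx: "convex_on A (\<lambda>X. ln (g (exp X)))"
    using convex_on_subset[OF g_logconvex[folded S_def] AS] A_def by auto
  have fD: "((\<lambda>X. ln (g (exp X))) has_real_derivative c) (at (ln x0))"
  proof -
    have e1: "(exp has_real_derivative x0) (at (ln x0))" using x0pos DERIV_exp[of "ln x0"] by simp
    have e2: "(g has_real_derivative b) (at (exp (ln x0)))" using gD x0pos by simp
    have e3: "((\<lambda>X. g (exp X)) has_real_derivative b * x0) (at (ln x0))"
      using DERIV_chain2[OF e2 e1] .
    have e4: "(ln has_real_derivative 1 / g x0) (at (g (exp (ln x0))))"
      using DERIV_ln[of "g x0"] gx0 lx0 x0pos by (simp add: divide_inverse)
    have "((\<lambda>X. ln (g (exp X))) has_real_derivative 1 / g x0 * (b * x0)) (at (ln x0))"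
      using DERIV_chain2[OF e4 e3] .
    thus ?thesis using x0pos unfolding c_def by (simp add: field_simps)
  qed
  have tang: "ln (g x) - ln (g x0) \<ge> c * (ln x - ln x0)" if "x \<ge> x0" for x
  proof -
    have "ln x \<in> A" using that x0pos x2x0 x2(1) A_def by auto
    moreover have "ln x0 \<in> interior A" using x0pos x2x0 A_def x2 by (auto simp: interior_open)
    ultimately have "ln (g (exp (ln x))) - ln (g (exp (ln x0))) \<ge> c * (ln x - ln x0)"
      using convex_on_imp_above_tangent[OF cvx _ _ _ has_field_derivative_at_within[OF fD]]
        A_def by auto
    thus ?thesis using that x0pos by auto
  qed
  have pt: "lam x0 / lam x * (x / x0) powr (x0 * a / lam x0) \<le> g x / lam x" if "x \<ge> x0" for x
  proof -
    have xp: "x > 0" "lam x > 0" "g x > 0" using that x0pos lam_pos g_pos S_def by auto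
    have gx0p: "g x0 > 0" using gx0 lx0 by auto
    have "(x / x0) powr (x0 * a / lam x0) \<le> (x / x0) powr c"
      using ac that x0pos by (intro powr_mono) auto
    also have "\<dots> = exp (c * (ln x - ln x0))" using xp x0pos
      by (simp add: powr_def ln_div mult.commute)
    also have "\<dots> \<le> exp (ln (g x) - ln (g x0))" using tang[OF that] by simp
    also have "\<dots> = g x / g x0" using xp gx0p by (simp add: exp_diff)
    finally have "(x / x0) powr (x0 * a / lam x0) \<le> g x / lam x0" using gx0 by simp
    hence "lam x0 * (x / x0) powr (x0 * a / lam x0) \<le> g x" using lx0 by (simp add: field_simps)
    thus ?thesis using xp by (simp add: field_simps divide_right_mono)
  qed
  have "S_int x0 lam \<le> (\<integral>\<^sup>+ x \<in> {x0..}. ennreal (g x / lam x) \<partial>lborel)"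
    unfolding S_int_def dl
  proof (intro nn_integral_mono)
    fix x :: real
    show "ennreal (lam x0 / lam x * (x / x0) powr (x0 * a / lam x0)) * indicator {x0..} x
          \<le> ennreal (g x / lam x) * indicator {x0..} x"
    proof (cases "x \<ge> x0")
      case True
      thus ?thesis using pt[OF True] by (simp add: ennreal_leI)
    qed simp
  qed
  thus ?thesis using x2x0 x0x1 gx0 by blast
qed

end
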